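(* Let $\mathbb{K}$ be a field of characteristic $0$, let $F(n)$ be a holonomic sequence of order $J>0$, and let $L=\sum_{i=0}^{J}a_i(n)\sigma^i\in\operatorname{ann}F(n)$ with $a_0(n)a_J(n)\neq0$. Let $a(n),b(n)\in\mathbb{K}[n]$ be such that $\frac{a(n)}{b(n)}F(n)$ is summable. Suppose that for every $h\in\mathbb{N}=\{0,1,2,\dots\}$, \[\gcd(a_0(n),a_J(n+h))=\gcd(b(n),b(n+J+h))=1\] and \[\gcd(a_0(n),b(n+J+h))=\gcd(b(n),a_J(n+h))=1.\] Then $b(n)\mid a(n)$.
   Context: $\sigma$ is the shift operator, $L(F(n))=\sum_i a_i(n)F(n+i)$, $\operatorname{ann}F(n)=\{L\in\mathbb{K}[n][\sigma]:L(F(n))=0\}$, $F$ holonomic means $\operatorname{ann}F\neq\{0\}$, and the order of $F$ is the minimal order of a nonzero element of $\operatorname{ann}F$. A holonomic sequence $G(n)$ of order $J$ is summable if $G(n)=\Delta\big(\sum_{i=0}^{J-1}u_i(n)G(n+i)\big)$ for some rational functions $u_i(n)\in\mathbb{K}(n)$, where $\Delta=\sigma-1$. *)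

theory Defs
  imports "HOL-Computational_Algebra.Computational_Algebra"
begin

text \<open>A recurrence operator  L = sum_{i=0}^{J} c_i(n) sigma^i  is represented by its
coefficient function c (only c 0, ..., c J are used) together with the bound J.
Sequences are functions nat => 'k; as usual for holonomic sequences, identities are
required to hold for all sufficiently large n.\<close>

definition apply_op :: "(nat \<Rightarrow> 'k::field poly) \<Rightarrow> nat \<Rightarrow> (nat \<Rightarrow> 'k) \<Rightarrow> nat \<Rightarrow> 'k" where
  "apply_op c J F n = (\<Sum>i\<le>J. poly (c i) (of_nat n) * F (n + i))"

definition annihilates :: "(nat \<Rightarrow> 'k::field poly) \<Rightarrow> nat \<Rightarrow> (nat \<Rightarrow> 'k) \<Rightarrow> bool" where
  "annihilates c J F \<longleftrightarrow> eventually (\<lambda>n. apply_op c J F n = 0) sequentially"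

definition holonomic :: "(nat \<Rightarrow> 'k::field) \<Rightarrow> bool" where
  "holonomic F \<longleftrightarrow> (\<exists>J c. c J \<noteq> 0 \<and> annihilates c J F)"

definition hol_order :: "(nat \<Rightarrow> 'k::field) \<Rightarrow> nat" where
  "hol_order F = (LEAST J. \<exists>c. c J \<noteq> 0 \<and> annihilates c J F)"

definition rat_eval :: "'k::field poly \<Rightarrow> 'k poly \<Rightarrow> nat \<Rightarrow> 'k" where
  "rat_eval p q n = poly p (of_nat n) / poly q (of_nat n)"

text \<open>G holonomic of order J is summable iff G = Delta(sum_{i<J} u_i(n) G(n+i))
for rational functions u_i = p_i / q_i.\<close>
definition summable_hol :: "(nat \<Rightarrow> 'k::field) \<Rightarrow> bool" where
  "summable_hol G \<longleftrightarrow> holonomic G \<and>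
     (\<exists>p q :: nat \<Rightarrow> 'k poly. (\<forall>i < hol_order G. q i \<noteq> 0) \<and>
        eventually (\<lambda>n. G n =
            (\<Sum>i<hol_order G. rat_eval (p i) (q i) (n + 1) * G (n + 1 + i))
          - (\<Sum>i<hol_order G. rat_eval (p i) (q i) n * G (n + i))) sequentially)"

definition shift_poly :: "nat \<Rightarrow> 'k::field poly \<Rightarrow> 'k poly" where
  "shift_poly h p = p \<circ>\<^sub>p [:of_nat h, 1:]"

end

theory Submission
  imports Defs
begin


definition sh :: "'k::field \<Rightarrow> 'k poly \<Rightarrow> 'k poly" where
  "sh x p = p \<circ>\<^sub>p [:x, 1:]"

lemma sh_sh: "sh x (sh y p) = sh (x + y) p"
  unfolding sh_def pcompose_assoc[symmetric] by (simp add: pcompose_pCons add.commute)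

lemma sh_0 [simp]: "sh 0 p = p"
  by (simp add: sh_def)

lemma sh_mult [simp]: "sh x (p * q) = sh x p * sh x q"
  by (simp add: sh_def pcompose_mult)
lemma sh_add [simp]: "sh x (p + q) = sh x p + sh x q"
  by (simp add: sh_def pcompose_add)
lemma sh_diff [simp]: "sh x (p - q) = sh x p - sh x q"
  by (simp add: sh_def pcompose_diff)
lemma sh_uminus [simp]: "sh x (- p) = - sh x p"
  by (simp add: sh_def pcompose_uminus)
lemma sh_sum: "sh x (sum f A) = (\<Sum>i\<in>A. sh x (f i))"
  by (simp add: sh_def pcompose_sum)
lemma sh_prod: "sh x (prod f A) = (\<Prod>i\<in>A. sh x (f i))"
  by (simp add: sh_def pcompose_prod)
lemma sh_const [simp]: "sh x [:c:] = [:c:]"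
  by (simp add: sh_def)
lemma sh_zero [simp]: "sh x 0 = 0"
  by (simp add: sh_def)
lemma sh_one [simp]: "sh x 1 = 1"
  by (simp add: sh_def pcompose_1)
lemma poly_sh [simp]: "poly (sh x p) y = poly p (y + x)"
  by (simp add: sh_def poly_pcompose add.commute)

lemma sh_inv: "sh (- x) (sh x p) = p"
  by (simp add: sh_sh)
lemma sh_inv': "sh x (sh (- x) p) = p"
  by (simp add: sh_sh)

lemma sh_inj: "sh x p = sh x q \<longleftrightarrow> p = q"
  by (metis sh_inv)

lemma sh_eq_0 [simp]: "sh x p = 0 \<longleftrightarrow> p = 0"
  by (metis sh_inj sh_zero)

lemma sh_dvd: "p dvd q \<Longrightarrow> sh x p dvd sh x q"
  by (metis dvd_def sh_mult)

lemma sh_dvd_iff: "sh x p dvd sh x q \<longleftrightarrow> p dvd q"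
  by (metis sh_dvd sh_inv)

lemma sh_unit: "is_unit (sh x p) \<longleftrightarrow> is_unit p"
  by (metis sh_dvd_iff sh_one)

lemma prime_elem_sh:
  assumes "prime_elem p" shows "prime_elem (sh x p)"
proof (rule prime_elemI)
  show "sh x p \<noteq> 0" using assms by (simp add: prime_elem_def)
  show "\<not> is_unit (sh x p)" using assms by (simp add: sh_unit prime_elem_def)
  fix u v assume "sh x p dvd u * v"
  then have "p dvd sh (-x) u * sh (-x) v"
    by (metis sh_dvd_iff sh_inv' sh_mult)
  then have "p dvd sh (-x) u \<or> p dvd sh (-x) v" using assms prime_elem_dvd_mult_iff by blast
  then show "sh x p dvd u \<or> sh x p dvd v"
    by (metis sh_dvd_iff sh_inv')
qed

lemma shift_poly_sh: "shift_poly h p = sh (of_nat h) p"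
  by (simp add: shift_poly_def sh_def)

lemma prime_elem_dvd_prod:
  assumes "prime_elem p" "finite A" "p dvd prod f A"
  shows "\<exists>i\<in>A. p dvd f i"
  using assms(2,3)
proof (induction A rule: finite_induct)
  case empty then show ?case using assms(1) by (simp add: prime_elem_def)
next
  case (insert x F)
  then show ?case using assms(1) prime_elem_dvd_mult_iff by auto
qed

lemma eventually_poly_nz:
  fixes p :: "'k::field_char_0 poly"
  assumes "p \<noteq> 0"
  shows "eventually (\<lambda>n. poly p (of_nat n) \<noteq> 0) sequentially"
proof -
  have "finite (of_nat -` {x. poly p x = 0} :: nat set)"
    by (rule finite_vimageI[OF poly_roots_finite[OF assms]]) (simp add: inj_of_nat)
  then show ?thesis
    by (simp add: cofinite_eq_sequentially[symmetric] eventually_cofinite vimage_def)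
qed

lemma poly_eventually_zero:
  fixes p :: "'k::field_char_0 poly"
  assumes "eventually (\<lambda>n. poly p (of_nat n) = 0) sequentially"
  shows "p = 0"
  using eventually_poly_nz assms eventually_happens' by (metis (mono_tags, lifting) eventually_conj_iff sequentially_bot)



definition ofp :: "'a::idom \<Rightarrow> 'a fract" where "ofp p = Fract p 1"

lemma ofp_add [simp]: "ofp (p + q) = ofp p + ofp q" by (simp add: ofp_def)
lemma ofp_mult [simp]: "ofp (p * q) = ofp p * ofp q" by (simp add: ofp_def)
lemma ofp_uminus [simp]: "ofp (- p) = - ofp p" by (simp add: ofp_def)
lemma ofp_diff [simp]: "ofp (p - q) = ofp p - ofp q" by (simp add: ofp_def)
lemma ofp_0 [simp]: "ofp 0 = 0" by (simp add: ofp_def Zero_fract_def)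
lemma ofp_1 [simp]: "ofp 1 = 1" by (simp add: ofp_def One_fract_def)
lemma ofp_inj [simp]: "ofp p = ofp q \<longleftrightarrow> p = q" by (simp add: ofp_def eq_fract)
lemma ofp_eq_0 [simp]: "ofp p = 0 \<longleftrightarrow> p = 0" by (metis ofp_0 ofp_inj)
lemma ofp_sum: "ofp (sum f A) = (\<Sum>i\<in>A. ofp (f i))"
  by (induction A rule: infinite_finite_induct) auto
lemma ofp_prod: "ofp (prod f A) = (\<Prod>i\<in>A. ofp (f i))"
  by (induction A rule: infinite_finite_induct) auto
lemma Fract_div: "Fract p q = ofp p / ofp q"
  by (cases "q = 0") (simp_all add: ofp_def eq_fract)

definition rep :: "'a::idom fract \<Rightarrow> 'a \<times> 'a" where
  "rep x = (SOME pq. snd pq \<noteq> 0 \<and> x = Fract (fst pq) (snd pq))"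

lemma rep: "snd (rep x) \<noteq> 0 \<and> x = Fract (fst (rep x)) (snd (rep x))"
proof -
  obtain p q where "x = Fract p q" "q \<noteq> 0" by (cases x)
  then have "\<exists>pq. snd pq \<noteq> 0 \<and> x = Fract (fst pq) (snd pq)" by (intro exI[of _ "(p,q)"]) auto
  then show ?thesis unfolding rep_def by (rule someI_ex)
qed

definition sF :: "'k::field \<Rightarrow> 'k poly fract \<Rightarrow> 'k poly fract" where
  "sF k x = Fract (sh k (fst (rep x))) (sh k (snd (rep x)))"

lemma sF_Fract: "sF k (Fract p q) = Fract (sh k p) (sh k q)"
proof -
  obtain p' q' where r: "rep (Fract p q) = (p', q')" by fastforce
  with rep[of "Fract p q"] have q': "q' \<noteq> 0" and e: "Fract p q = Fract p' q'" by auto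
  show ?thesis
  proof (cases "q = 0")
    case True
    then have "p' = 0" using e q' by (simp add: eq_fract)
    then show ?thesis using True r by (simp add: sF_def eq_fract)
  next
    case False
    then have "p * q' = p' * q" using e q' by (simp add: eq_fract)
    then have "sh k p * sh k q' = sh k p' * sh k q" by (metis sh_mult)
    then show ?thesis using False q' r by (simp add: sF_def eq_fract)
  qed
qed

lemma sF_ofp [simp]: "sF k (ofp p) = ofp (sh k p)"
  by (simp add: ofp_def sF_Fract)

lemma sF_add [simp]: "sF k (x + y) = sF k x + sF k y"
  by (cases x, cases y) (simp add: sF_Fract)
lemma sF_mult [simp]: "sF k (x * y) = sF k x * sF k y"
  by (cases x, cases y) (simp add: sF_Fract)
lemma sF_uminus [simp]: "sF k (- x) = - sF k x"
  by (cases x) (simp add: sF_Fract)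
lemma sF_diff [simp]: "sF k (x - y) = sF k x - sF k y"
  by (cases x, cases y) (simp add: sF_Fract)
lemma sF_divide [simp]: "sF k (x / y) = sF k x / sF k y"
  by (cases x, cases y) (simp add: sF_Fract)
lemma sF_zero [simp]: "sF k 0 = 0"
  by (metis ofp_0 sF_ofp sh_zero)
lemma sF_sum: "sF k (sum f A) = (\<Sum>i\<in>A. sF k (f i))"
  by (induction A rule: infinite_finite_induct) auto
lemma sF_sF: "sF k (sF l x) = sF (k + l) x"
  by (cases x) (simp add: sF_Fract sh_sh add.commute)



lemma hol_order_le:
  assumes "c m \<noteq> 0" "annihilates c m F"
  shows "hol_order F \<le> m"
  unfolding hol_order_def by (rule Least_le) (use assms in blast)

lemma eventually_shift_all:
  assumes "eventually P sequentially"
  shows "eventually (\<lambda>n. \<forall>i\<le>K. P (n + i)) sequentially"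
proof -
  from assms obtain N where "\<And>n. n \<ge> N \<Longrightarrow> P n" by (auto simp: eventually_sequentially)
  then show ?thesis by (auto simp: eventually_sequentially intro!: exI[of _ N])
qed

lemma ann_unique:
  fixes F :: "nat \<Rightarrow> 'k::field_char_0"
  assumes "hol_order F = J" "annihilates c J F" "c J \<noteq> 0" "annihilates z J F"
  shows "\<forall>i\<le>J. c J * z i = z J * c i"
proof (rule ccontr)
  define e where "e i = c J * z i - z J * c i" for i
  assume "\<not> (\<forall>i\<le>J. c J * z i = z J * c i)"
  then have ex: "\<exists>i. i \<le> J \<and> e i \<noteq> 0" by (auto simp: e_def)
  define m where "m = Max {i. i \<le> J \<and> e i \<noteq> 0}"
  have fin: "finite {i. i \<le> J \<and> e i \<noteq> 0}" by auto
  have mJ: "m \<le> J" "e m \<noteq> 0" using Max_in[OF fin] ex unfolding m_def by auto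
  have big: "e i = 0" if "m < i" "i \<le> J" for i
    using Max_ge[OF fin, of i] that unfolding m_def by (metis (mono_tags, lifting) leD mem_Collect_eq)
  have "m \<noteq> J"
  proof
    assume "m = J"
    then have "e m = 0" by (simp add: e_def mult.commute)
    then show False using mJ by simp
  qed
  have ev: "eventually (\<lambda>n. apply_op e m F n = 0) sequentially"
  proof (rule eventually_elim2[OF assms(2,4)[unfolded annihilates_def]])
    fix n assume h: "apply_op c J F n = 0" "apply_op z J F n = 0"
    have "apply_op e J F n = poly (c J) (of_nat n) * apply_op z J F n - poly (z J) (of_nat n) * apply_op c J F n"
      unfolding apply_op_def e_def by (simp add: sum_distrib_left sum_subtractf algebra_simps)
    also have "\<dots> = 0" using h by simp
    finally have "apply_op e J F n = 0" .
    moreover have "apply_op e J F n = apply_op e m F n"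
    proof -
      have "{..J} = {..m} \<union> {m<..J}" using mJ by auto
      then have "apply_op e J F n = apply_op e m F n + (\<Sum>i\<in>{m<..J}. poly (e i) (of_nat n) * F (n + i))"
        unfolding apply_op_def by (simp only:) (rule sum.union_disjoint, auto)
      also have "(\<Sum>i\<in>{m<..J}. poly (e i) (of_nat n) * F (n + i)) = 0"
        by (rule sum.neutral) (auto simp: big)
      finally show ?thesis by simp
    qed
    ultimately show "apply_op e m F n = 0" by simp
  qed
  then have "hol_order F \<le> m" using mJ by (intro hol_order_le) (auto simp: annihilates_def)
  then show False using assms(1) mJ \<open>m \<noteq> J\<close> by simp
qed

lemma ann_transfer:
  fixes F G :: "nat \<Rightarrow> 'k::field_char_0"
  assumes "\<alpha> \<noteq> 0" "\<beta> \<noteq> 0"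
    and "eventually (\<lambda>n. G n = poly \<alpha> (of_nat n) / poly \<beta> (of_nat n) * F n) sequentially"
    and "annihilates d K F" "d K \<noteq> 0"
  shows "\<exists>d'. d' K \<noteq> 0 \<and> annihilates d' K G"
proof -
  define Pr where "Pr = (\<Prod>j\<le>K. sh (of_nat j) \<alpha>)"
  define d' where "d' i = d i * sh (of_nat i) \<beta> * (Pr div sh (of_nat i) \<alpha>)" for i
  have dvdP: "sh (of_nat i) \<alpha> dvd Pr" if "i \<le> K" for i
    unfolding Pr_def using that by (intro dvd_prodI) auto
  have Pnz: "Pr \<noteq> 0" unfolding Pr_def using assms(1) by auto
  have PK: "Pr div sh (of_nat K) \<alpha> \<noteq> 0"
    using dvdP[of K] Pnz by (metis dvd_div_mult_self mult_zero_left order_refl)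
  have "d' K \<noteq> 0" unfolding d'_def using assms(2,5) PK by simp
  moreover have "annihilates d' K G"
    unfolding annihilates_def
  proof -
    have e1: "eventually (\<lambda>n. \<forall>i\<le>K. G (n + i) = poly \<alpha> (of_nat (n+i)) / poly \<beta> (of_nat (n+i)) * F (n + i)
                \<and> poly \<beta> (of_nat (n+i)) \<noteq> 0) sequentially"
      using eventually_shift_all[OF eventually_conj[OF assms(3) eventually_poly_nz[OF assms(2)]], of K]
      by simp
    show "eventually (\<lambda>n. apply_op d' K G n = 0) sequentially"
    proof (rule eventually_elim2[OF e1 assms(4)[unfolded annihilates_def]])
      fix n assume h: "\<forall>i\<le>K. G (n + i) = poly \<alpha> (of_nat (n+i)) / poly \<beta> (of_nat (n+i)) * F (n + i)
                \<and> poly \<beta> (of_nat (n+i)) \<noteq> 0" and a: "apply_op d K F n = 0"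
      have "apply_op d' K G n = (\<Sum>i\<le>K. poly Pr (of_nat n) * (poly (d i) (of_nat n) * F (n + i)))"
        unfolding apply_op_def
      proof (rule sum.cong[OF refl])
        fix i assume i: "i \<in> {..K}"
        have pp: "poly (Pr div sh (of_nat i) \<alpha>) (of_nat n) * poly \<alpha> (of_nat (n+i)) = poly Pr (of_nat n)"
          using dvdP[of i] i by (metis atMost_iff dvd_div_mult_self of_nat_add poly_mult poly_sh)
        show "poly (d' i) (of_nat n) * G (n + i) = poly Pr (of_nat n) * (poly (d i) (of_nat n) * F (n + i))"
          using h i pp unfolding d'_def by (auto simp: field_simps)
      qed
      also have "\<dots> = poly Pr (of_nat n) * apply_op d K F n"
        unfolding apply_op_def by (simp add: sum_distrib_left)
      finally show "apply_op d' K G n = 0" using a by simp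
    qed
  qed
  ultimately show ?thesis by blast
qed



lemma unit_prod: "(\<And>i. i \<in> A \<Longrightarrow> is_unit (f i)) \<Longrightarrow> is_unit (prod f A)"
  by (induction A rule: infinite_finite_induct) (auto simp: is_unit_mult_iff)

lemma unit_factor_sh:
  fixes p :: "'k::{field_char_0,field_gcd} poly"
  shows "unit_factor (sh x p) = unit_factor p"
  by (simp add: unit_factor_poly_def sh_def lead_coeff_comp)

lemma sh_periodic_const:
  fixes g :: "'k::field_char_0 poly"
  assumes "sh d g = g" "d \<noteq> 0"
  shows "degree g = 0"
proof -
  have per: "poly g (of_nat m * d) = poly g 0" for m
  proof (induction m)
    case (Suc m)
    have "poly g (of_nat (Suc m) * d) = poly (sh d g) (of_nat m * d)"
      by (simp add: algebra_simps)
    then show ?case using Suc assms(1) by simp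
  qed simp
  define r where "r = g - [:poly g 0:]"
  have "r = 0"
  proof (rule ccontr)
    assume "r \<noteq> 0"
    then have fin: "finite {x. poly r x = 0}" by (rule poly_roots_finite)
    have "(\<lambda>m::nat. of_nat m * d) ` UNIV \<subseteq> {x. poly r x = 0}"
      using per by (auto simp: r_def)
    moreover have "inj (\<lambda>m::nat. of_nat m * d)"
      using assms(2) by (auto intro!: injI)
    ultimately show False using fin
      by (meson finite_imageD finite_subset infinite_UNIV_nat)
  qed
  then have "g = [:poly g 0:]" by (simp add: r_def)
  then show ?thesis by (metis degree_pCons_0)
qed

lemma finite_shift_dvd:
  fixes g0 Q :: "'k::{field_char_0,field_gcd} poly"
  assumes "prime_elem g0" "Q \<noteq> 0" "inj f"
  shows "finite {s. sh (f s) g0 dvd Q}"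
proof -
  let ?A = "{s. sh (f s) g0 dvd Q}"
  let ?m = "\<lambda>s. normalize (sh (f s) g0)"
  have "?m ` ?A \<subseteq> prime_factors Q"
    using assms(1,2) by (auto simp: in_prime_factors_iff prime_elem_sh)
  then have "finite (?m ` ?A)" by (rule finite_subset) simp
  moreover have "inj_on ?m ?A"
  proof (rule inj_onI)
    fix s t assume "s \<in> ?A" "t \<in> ?A" and eq: "?m s = ?m t"
    have "sh (f s) g0 = unit_factor (sh (f s) g0) * ?m s" by simp
    also have "\<dots> = unit_factor (sh (f t) g0) * ?m t" by (simp add: unit_factor_sh eq)
    also have "\<dots> = sh (f t) g0" by simp
    finally have "sh (f s) g0 = sh (f t) g0" .
    then have "sh (- f t) (sh (f s) g0) = g0" by (simp add: sh_inv)
    then have "sh (f s - f t) g0 = g0" by (simp add: sh_sh)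
    show "s = t"
    proof (rule ccontr)
      assume "s \<noteq> t"
      then have "f s - f t \<noteq> 0" using assms(3) by (auto dest: injD)
      then have "degree g0 = 0" using \<open>sh (f s - f t) g0 = g0\<close> sh_periodic_const by blast
      then have "is_unit g0" using assms(1) is_unit_iff_degree[of g0] by (simp add: prime_elem_def)
      then show False using assms(1) by (simp add: prime_elem_def)
    qed
  qed
  ultimately show ?thesis by (rule finite_imageD)
qed



lemma side:
  fixes \<pi> :: "'k::{field_char_0,field_gcd} poly" and k J :: nat
  assumes pr: "prime_elem \<pi>" and k: "k \<le> J" and dq: "\<pi> dvd Qs k"
    and id: "A * (\<Prod>i\<le>J. Qs i) = - (B * (\<Sum>i\<le>J. T i * (\<Prod>j\<in>{..J}-{i}. Qs j)))"
  shows "\<pi> dvd B \<or> \<pi> dvd T k \<or> (\<exists>j\<le>J. j \<noteq> k \<and> \<pi> dvd Qs j)"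
proof -
  have "Qs k dvd (\<Prod>i\<le>J. Qs i)" using k by (intro dvd_prodI) auto
  then have "\<pi> dvd (\<Prod>i\<le>J. Qs i)" using dq by (rule dvd_trans[rotated])
  then have "\<pi> dvd A * (\<Prod>i\<le>J. Qs i)" by simp
  then have d1: "\<pi> dvd B * (\<Sum>i\<le>J. T i * (\<Prod>j\<in>{..J}-{i}. Qs j))" using id by simp
  have split: "(\<Sum>i\<le>J. T i * (\<Prod>j\<in>{..J}-{i}. Qs j)) =
      T k * (\<Prod>j\<in>{..J}-{k}. Qs j) + (\<Sum>i\<in>{..J}-{k}. T i * (\<Prod>j\<in>{..J}-{i}. Qs j))"
    using k by (subst sum.remove[of _ k]) auto
  have d2: "\<pi> dvd (\<Sum>i\<in>{..J}-{k}. T i * (\<Prod>j\<in>{..J}-{i}. Qs j))"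
  proof (rule dvd_sum)
    fix i assume "i \<in> {..J}-{k}"
    then have "k \<in> {..J}-{i}" using k by auto
    then have "Qs k dvd (\<Prod>j\<in>{..J}-{i}. Qs j)" by (intro dvd_prodI) auto
    then show "\<pi> dvd T i * (\<Prod>j\<in>{..J}-{i}. Qs j)" using dq by (meson dvd_mult dvd_trans)
  qed
  have "\<pi> dvd B * (T k * (\<Prod>j\<in>{..J}-{k}. Qs j))"
  proof -
    have "B * (\<Sum>i\<le>J. T i * (\<Prod>j\<in>{..J}-{i}. Qs j)) = B * (T k * (\<Prod>j\<in>{..J}-{k}. Qs j))
       + B * (\<Sum>i\<in>{..J}-{k}. T i * (\<Prod>j\<in>{..J}-{i}. Qs j))"
      by (simp only: split distrib_left)
    moreover have "\<pi> dvd B * (\<Sum>i\<in>{..J}-{k}. T i * (\<Prod>j\<in>{..J}-{i}. Qs j))"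
      using d2 by (rule dvd_mult)
    ultimately show ?thesis using d1 by (simp only: dvd_add_left_iff)
  qed
  then have "\<pi> dvd B \<or> \<pi> dvd T k \<or> \<pi> dvd (\<Prod>j\<in>{..J}-{k}. Qs j)"
    using pr by (simp add: prime_elem_dvd_mult_iff)
  then show ?thesis
  proof (elim disjE)
    assume "\<pi> dvd (\<Prod>j\<in>{..J}-{k}. Qs j)"
    then obtain j where "j \<in> {..J}-{k}" "\<pi> dvd Qs j" using prime_elem_dvd_prod[OF pr] by blast
    then show ?thesis by auto
  qed auto
qed

lemma unit_of_gcd:
  assumes "x dvd u" "x dvd v" "gcd u v = 1"
  shows "is_unit (x :: 'k::{field_char_0,field_gcd} poly)"
  using assms by (metis gcd_greatest)

lemma key:
  fixes a b P Q :: "'k::{field_char_0,field_gcd} poly" and c :: "nat \<Rightarrow> 'k poly"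
  assumes cop: "coprime P Q" and Qnz: "Q \<noteq> 0"
    and id: "sh (of_nat J) a * (\<Prod>i\<le>J. sh (of_nat (J-i)) Q) =
        - (sh (of_nat J) b * (\<Sum>i\<le>J. (sh (of_nat (J-i)) P * sh (of_nat (J-i)) (c i)) *
              (\<Prod>j\<in>{..J}-{i}. sh (of_nat (J-j)) Q)))"
    and h1: "\<forall>h::nat. gcd (c 0) (shift_poly h (c J)) = 1 \<and> gcd b (shift_poly (J + h) b) = 1"
    and h2: "\<forall>h::nat. gcd (c 0) (shift_poly (J + h) b) = 1 \<and> gcd b (shift_poly h (c J)) = 1"
  shows "b dvd a"
proof -
  have Qu: "is_unit Q"
  proof (rule ccontr)
    assume nu: "\<not> is_unit Q"
    obtain g0 where g0: "g0 dvd Q" "prime g0" using prime_divisor_exists[OF Qnz nu] by blast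
    then have pg0: "prime_elem g0" by blast
    define A0 where "A0 = {s::nat. sh (of_nat s) g0 dvd Q}"
    have finA: "finite A0" unfolding A0_def
      by (rule finite_shift_dvd[OF pg0 Qnz]) (simp add: inj_of_nat)
    have "0 \<in> A0" using g0 by (simp add: A0_def)
    define s1 where "s1 = Max A0"
    have "s1 \<in> A0" unfolding s1_def using finA \<open>0 \<in> A0\<close> by (intro Max_in) auto
    define g where "g = sh (of_nat s1) g0"
    have pg: "prime_elem g" unfolding g_def by (rule prime_elem_sh[OF pg0])
    have gQ: "g dvd Q" using \<open>s1 \<in> A0\<close> by (simp add: A0_def g_def)
    have gtop: "\<not> sh (of_nat s) g dvd Q" if "s \<ge> 1" for s
    proof
      assume "sh (of_nat s) g dvd Q"
      then have "s + s1 \<in> A0" by (simp add: A0_def g_def sh_sh add.commute)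
      then have "s + s1 \<le> s1" unfolding s1_def by (rule Max_ge[OF finA])
      then show False using that by simp
    qed
    define B0 where "B0 = {s::nat. sh (- of_nat s) g dvd Q}"
    have B0_iff: "s \<in> B0 \<longleftrightarrow> g dvd sh (of_nat s) Q" for s
      unfolding B0_def by (subst sh_dvd_iff[of "of_nat s", symmetric]) (simp add: sh_inv')
    have finB: "finite B0" unfolding B0_def
      by (rule finite_shift_dvd[OF pg Qnz]) (auto intro!: injI)
    have "0 \<in> B0" using gQ by (simp add: B0_def)
    define h where "h = Max B0"
    have "h \<in> B0" unfolding h_def using finB \<open>0 \<in> B0\<close> by (intro Max_in) auto
    define g' where "g' = sh (- of_nat h) g"
    have pg': "prime_elem g'" unfolding g'_def by (rule prime_elem_sh[OF pg])
    have gg': "g = sh (of_nat h) g'" by (simp add: g'_def sh_inv')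
    have g'Q: "g' dvd Q" using \<open>h \<in> B0\<close> by (simp add: B0_def g'_def)
    have gbot: "\<not> g' dvd sh (of_nat s) Q" if "s \<ge> 1" for s
    proof
      assume "g' dvd sh (of_nat s) Q"
      then have "sh (of_nat h) g' dvd sh (of_nat h) (sh (of_nat s) Q)" by (rule sh_dvd)
      then have "g dvd sh (of_nat (s + h)) Q" by (simp add: gg' sh_sh add.commute)
      then have "s + h \<in> B0" by (simp add: B0_iff)
      then have "s + h \<le> h" unfolding h_def by (rule Max_ge[OF finB])
      then show False using that by simp
    qed
    have top: "g dvd b \<or> g dvd c 0"
    proof -
      have "sh (of_nat J) g dvd sh (of_nat (J - 0)) Q" using gQ by (simp add: sh_dvd_iff)
      from side[OF prime_elem_sh[OF pg] _ this id]
      have "sh (of_nat J) g dvd sh (of_nat J) b \<or>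
            sh (of_nat J) g dvd sh (of_nat J) P * sh (of_nat J) (c 0) \<or>
            (\<exists>j\<le>J. j \<noteq> 0 \<and> sh (of_nat J) g dvd sh (of_nat (J - j)) Q)" by simp
      moreover have "\<not> sh (of_nat J) g dvd sh (of_nat (J - j)) Q" if "j \<le> J" "j \<noteq> 0" for j
      proof
        assume "sh (of_nat J) g dvd sh (of_nat (J - j)) Q"
        moreover have "sh (of_nat J) g = sh (of_nat (J - j)) (sh (of_nat j) g)"
          using that by (simp add: sh_sh of_nat_diff)
        ultimately have "sh (of_nat j) g dvd Q" by (simp add: sh_dvd_iff)
        then show False using gtop[of j] that by simp
      qed
      moreover have "\<not> g dvd P"
      proof
        assume "g dvd P"
        then have "is_unit g" using gQ cop by (meson coprime_common_divisor)
        then show False using pg by (simp add: prime_elem_def)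
      qed
      ultimately consider "sh (of_nat J) g dvd sh (of_nat J) b"
        | "sh (of_nat J) g dvd sh (of_nat J) P * sh (of_nat J) (c 0)" by blast
      then show ?thesis
      proof cases
        case 1 then show ?thesis by (simp add: sh_dvd_iff)
      next
        case 2
        then have "sh (of_nat J) g dvd sh (of_nat J) P \<or> sh (of_nat J) g dvd sh (of_nat J) (c 0)"
          using prime_elem_sh[OF pg, of "of_nat J"] prime_elem_dvd_mult_iff by blast
        then show ?thesis using \<open>\<not> g dvd P\<close> by (simp add: sh_dvd_iff)
      qed
    qed
    have bot: "g' dvd sh (of_nat J) b \<or> g' dvd c J"
    proof -
      have "g' dvd sh (of_nat (J - J)) Q" using g'Q by simp
      from side[OF pg' _ this id]
      have "g' dvd sh (of_nat J) b \<or>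
            g' dvd sh (of_nat 0) P * sh (of_nat 0) (c J) \<or>
            (\<exists>j\<le>J. j \<noteq> J \<and> g' dvd sh (of_nat (J - j)) Q)" by simp
      moreover have "\<not> g' dvd sh (of_nat (J - j)) Q" if "j \<le> J" "j \<noteq> J" for j
        using gbot[of "J - j"] that by simp
      moreover have "\<not> g' dvd P"
      proof
        assume "g' dvd P"
        then have "is_unit g'" using g'Q cop by (meson coprime_common_divisor)
        then show False using pg' by (simp add: prime_elem_def)
      qed
      ultimately consider "g' dvd sh (of_nat J) b" | "g' dvd P * c J" by auto
      then show ?thesis
      proof cases
        case 2
        then show ?thesis using pg' prime_elem_dvd_mult_iff \<open>\<not> g' dvd P\<close> by blast
      qed simp
    qed
    have gJb: "g dvd shift_poly (J + h) b" if "g' dvd sh (of_nat J) b"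
      using sh_dvd[OF that, of "of_nat h"] by (simp add: gg' sh_sh shift_poly_sh add.commute)
    have gcJ: "g dvd shift_poly h (c J)" if "g' dvd c J"
      using sh_dvd[OF that, of "of_nat h"] by (simp add: gg' shift_poly_sh)
    have "is_unit g"
      using top bot
    proof (elim disjE)
      assume "g dvd b" "g' dvd sh (of_nat J) b"
      then show ?thesis using gJb h1 unit_of_gcd by blast
    next
      assume "g dvd b" "g' dvd c J"
      then show ?thesis using gcJ h2 unit_of_gcd by blast
    next
      assume "g dvd c 0" "g' dvd sh (of_nat J) b"
      then show ?thesis using gJb h2 unit_of_gcd by blast
    next
      assume "g dvd c 0" "g' dvd c J"
      then show ?thesis using gcJ h1 unit_of_gcd by blast
    qed
    then show False using pg by (simp add: prime_elem_def)
  qed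
  have "is_unit (\<Prod>i\<le>J. sh (of_nat (J-i)) Q)"
    by (rule unit_prod) (simp add: sh_unit Qu)
  moreover have "sh (of_nat J) b dvd sh (of_nat J) a * (\<Prod>i\<le>J. sh (of_nat (J-i)) Q)"
    by (subst id) simp
  ultimately have "sh (of_nat J) b dvd sh (of_nat J) a" by (simp add: dvd_mult_unit_iff)
  then show ?thesis by (simp add: sh_dvd_iff)
qed



lemma coprime_rep:
  fixes x :: "'k::{field_char_0,field_gcd} poly fract"
  obtains P Q where "coprime P Q" "Q \<noteq> 0" "x = Fract P Q"
proof -
  obtain p q where x: "x = Fract p q" "q \<noteq> 0" by (cases x)
  define g where "g = gcd p q"
  have gnz: "g \<noteq> 0" using x(2) by (simp add: g_def)
  have cop: "coprime (p div g) (q div g)" unfolding g_def using x(2) by (intro div_gcd_coprime) simp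
  have qe: "q = (q div g) * g" by (simp add: g_def)
  have pe: "p = (p div g) * g" by (simp add: g_def)
  have Qnz: "q div g \<noteq> 0" using x(2) qe by (metis mult_zero_left)
  have "p * (q div g) = (p div g) * q"
    by (metis mult.assoc mult.commute pe qe)
  then have "x = Fract (p div g) (q div g)" using x Qnz by (simp add: eq_fract)
  then show ?thesis using that cop Qnz by blast
qed

lemma telescope:
  fixes R :: "'k::field poly fract" and W :: "nat \<Rightarrow> 'k poly fract"
  assumes "J > 0"
  shows "(\<Sum>i\<le>J. sF (of_nat (J - i))
     ((if i = 0 then - R else 0) + (if 1 \<le> i then sF 1 (W (i - 1)) else 0) - (if i < J then W i else 0)))
   = - sF (of_nat J) R"
proof -
  obtain m where J: "J = Suc m" using assms by (cases J) auto
  have s1: "(\<Sum>i\<le>J. sF (of_nat (J - i)) (if i = 0 then - R else 0)) = - sF (of_nat J) R"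
    by (simp add: if_distrib sum.delta cong: if_cong)
  have s2: "(\<Sum>i\<le>J. sF (of_nat (J - i)) (if 1 \<le> i then sF 1 (W (i - 1)) else 0))
      = (\<Sum>i<J. sF (of_nat (J - i)) (W i))"
  proof -
    have "(\<Sum>i\<le>J. sF (of_nat (J - i)) (if 1 \<le> i then sF 1 (W (i - 1)) else 0))
        = (\<Sum>i\<le>m. sF (of_nat (J - Suc i)) (sF 1 (W i)))"
      unfolding J by (subst sum.atMost_Suc_shift) simp
    also have "\<dots> = (\<Sum>i\<le>m. sF (of_nat (J - i)) (W i))"
    proof (rule sum.cong[OF refl])
      fix i assume "i \<in> {..m}"
      then have "of_nat (J - Suc i) + 1 = (of_nat (J - i) :: 'k)" unfolding J
        by (simp add: of_nat_diff Suc_diff_le)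
      then show "sF (of_nat (J - Suc i)) (sF 1 (W i)) = sF (of_nat (J - i)) (W i)"
        by (simp add: sF_sF)
    qed
    also have "\<dots> = (\<Sum>i<J. sF (of_nat (J - i)) (W i))"
      unfolding J by (simp add: lessThan_Suc_atMost)
    finally show ?thesis .
  qed
  have s3: "(\<Sum>i\<le>J. sF (of_nat (J - i)) (if i < J then W i else 0)) = (\<Sum>i<J. sF (of_nat (J - i)) (W i))"
  proof -
    have "(\<Sum>i\<le>J. sF (of_nat (J - i)) (if i < J then W i else 0)) =
       (\<Sum>i<Suc J. sF (of_nat (J - i)) (if i < J then W i else 0))"
      by (simp add: lessThan_Suc_atMost)
    also have "\<dots> = (\<Sum>i<J. sF (of_nat (J - i)) (if i < J then W i else 0))"
      by (subst sum.lessThan_Suc) simp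
    also have "\<dots> = (\<Sum>i<J. sF (of_nat (J - i)) (W i))" by (rule sum.cong) auto
    finally show ?thesis .
  qed
  show ?thesis
    by (simp only: sF_add sF_diff sum.distrib sum_subtractf s1 s2 s3) simp
qed



lemma sum_shape:
  fixes A :: "'a::ab_group_add" and J :: nat
  assumes "J > 0"
  shows "(\<Sum>i\<le>J. (if i = 0 then A else 0) + (if 1 \<le> i then B (i - 1) else 0) - (if i < J then C i else 0))
       = A + (\<Sum>i<J. B i) - (\<Sum>i<J. C i)"
proof -
  obtain m where J: "J = Suc m" using assms by (cases J) auto
  have s1: "(\<Sum>i\<le>J. (if i = 0 then A else 0)) = A" by (simp add: sum.delta)
  have s2: "(\<Sum>i\<le>J. (if 1 \<le> i then B (i - 1) else 0)) = (\<Sum>i<J. B i)"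
    unfolding J by (subst sum.atMost_Suc_shift) (simp add: lessThan_Suc_atMost)
  have s3: "(\<Sum>i\<le>J. (if i < J then C i else 0)) = (\<Sum>i<J. C i)"
  proof -
    have "(\<Sum>i\<le>J. (if i < J then C i else 0)) = (\<Sum>i<Suc J. (if i < J then C i else 0))"
      by (simp add: lessThan_Suc_atMost)
    also have "\<dots> = (\<Sum>i<J. (if i < J then C i else 0))" by (subst sum.lessThan_Suc) simp
    also have "\<dots> = (\<Sum>i<J. C i)" by (rule sum.cong) auto
    finally show ?thesis .
  qed
  show ?thesis by (simp only: sum.distrib sum_subtractf s1 s2 s3)
qed

theorem theorem3p1:
  fixes F :: "nat \<Rightarrow> 'k::{field_char_0,field_gcd}"
    and J :: nat
    and c :: "nat \<Rightarrow> 'k poly"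
    and a b :: "'k poly"
  assumes "holonomic F"
    and "hol_order F = J"
    and "J > 0"
    and "annihilates c J F"
    and "c 0 * c J \<noteq> 0"
    and "b \<noteq> 0"
    and "summable_hol (\<lambda>n. rat_eval a b n * F n)"
    and "\<forall>h::nat. gcd (c 0) (shift_poly h (c J)) = 1 \<and> gcd b (shift_poly (J + h) b) = 1"
    and "\<forall>h::nat. gcd (c 0) (shift_poly (J + h) b) = 1 \<and> gcd b (shift_poly h (c J)) = 1"
  shows "b dvd a"
proof (cases "a = 0")
  case True
  then show ?thesis by simp
next
  case anz: False
  note ordF = assms(2) and Jpos = assms(3) and annF = assms(4) and bnz = assms(6)
  have cJ: "c J \<noteq> 0" and c0: "c 0 \<noteq> 0" using assms(5) by auto
  define G where "G = (\<lambda>n. rat_eval a b n * F n)"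
  have sG: "summable_hol G" using assms(7) by (simp add: G_def)
  then obtain p q where hG: "holonomic G"
    and qnz0: "\<forall>i<hol_order G. q i \<noteq> 0"
    and E0: "eventually (\<lambda>n. G n =
            (\<Sum>i<hol_order G. rat_eval (p i) (q i) (n + 1) * G (n + 1 + i))
          - (\<Sum>i<hol_order G. rat_eval (p i) (q i) n * G (n + i))) sequentially"
    unfolding summable_hol_def by blast
  have ordG: "hol_order G = J"
  proof (rule antisym)
    have "eventually (\<lambda>n. G n = poly a (of_nat n) / poly b (of_nat n) * F n) sequentially"
      by (simp add: G_def rat_eval_def)
    from ann_transfer[OF anz bnz this annF cJ] obtain d' where "d' J \<noteq> 0" "annihilates d' J G" by blast
    then show "hol_order G \<le> J" by (rule hol_order_le)
  next
    have "\<exists>d. d (hol_order G) \<noteq> 0 \<and> annihilates d (hol_order G) G"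
      using hG unfolding holonomic_def hol_order_def by (rule LeastI_ex)
    then obtain d where d: "d (hol_order G) \<noteq> 0" "annihilates d (hol_order G) G" by blast
    have "eventually (\<lambda>n. F n = poly b (of_nat n) / poly a (of_nat n) * G n) sequentially"
      using eventually_conj[OF eventually_poly_nz[OF anz] eventually_poly_nz[OF bnz]]
      by (rule eventually_mono) (simp add: G_def rat_eval_def)
    from ann_transfer[OF bnz anz this d(2) d(1)] obtain d' where
      "d' (hol_order G) \<noteq> 0" "annihilates d' (hol_order G) F" by blast
    then have "hol_order F \<le> hol_order G" by (rule hol_order_le)
    then show "J \<le> hol_order G" using ordF by simp
  qed
  have qnz: "\<And>i. i < J \<Longrightarrow> q i \<noteq> 0" using qnz0 ordG by auto
  have E: "eventually (\<lambda>n. G n =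
            (\<Sum>i<J. rat_eval (p i) (q i) (n + 1) * G (n + 1 + i))
          - (\<Sum>i<J. rat_eval (p i) (q i) n * G (n + i))) sequentially"
    using E0 ordG by simp
  define qq where "qq i = (if i < J then q i else 1)" for i
  have qqnz: "qq i \<noteq> 0" for i using qnz by (simp add: qq_def)
  define D where "D i = b * sh 1 (q (i - 1)) * sh (of_nat i) b * qq i" for i
  define nu where "nu i =
     (if i = 0 then - (a * sh 1 (q (i - 1)) * sh (of_nat i) b * qq i) else 0)
   + (if 1 \<le> i then sh 1 (p (i - 1)) * sh (of_nat i) a * b * qq i else 0)
   - (if i < J then p i * sh (of_nat i) a * b * sh 1 (q (i - 1)) else 0)" for i
  have Dnz: "D i \<noteq> 0" if "i \<le> J" for i
    using that bnz qqnz qnz[of "i - 1"] Jpos by (simp add: D_def)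
  define u where "u i m = rat_eval (p i) (q i) m" for i m
  have ev_nz: "eventually (\<lambda>n. (\<forall>i\<le>J+1. poly b (of_nat (n+i)) \<noteq> 0) \<and>
      (\<forall>i\<in>{..<J}. \<forall>j\<le>1. poly (q i) (of_nat (n+j)) \<noteq> 0)) sequentially"
  proof (rule eventually_conj)
    show "eventually (\<lambda>n. \<forall>i\<le>J+1. poly b (of_nat (n+i)) \<noteq> 0) sequentially"
      by (rule eventually_shift_all[OF eventually_poly_nz[OF bnz]])
    show "eventually (\<lambda>n. \<forall>i\<in>{..<J}. \<forall>j\<le>1. poly (q i) (of_nat (n+j)) \<noteq> 0) sequentially"
    proof (rule eventually_ball_finite, simp, intro ballI)
      fix i assume "i \<in> {..<J}"
      then have "q i \<noteq> 0" using qnz by simp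
      from eventually_shift_all[OF eventually_poly_nz[OF this], of 1]
      show "eventually (\<lambda>n. \<forall>j\<le>1. poly (q i) (of_nat (n+j)) \<noteq> 0) sequentially" .
    qed
  qed
  have seqrel: "eventually (\<lambda>n. (\<Sum>i\<le>J. poly (nu i) (of_nat n) / poly (D i) (of_nat n) * F (n+i)) = 0
      \<and> (\<forall>i\<le>J. poly (D i) (of_nat n) \<noteq> 0)) sequentially"
    using eventually_conj[OF E ev_nz]
  proof (rule eventually_mono)
    fix n assume H: "G n = (\<Sum>i<J. rat_eval (p i) (q i) (n + 1) * G (n + 1 + i))
          - (\<Sum>i<J. rat_eval (p i) (q i) n * G (n + i)) \<and>
       (\<forall>i\<le>J+1. poly b (of_nat (n+i)) \<noteq> 0) \<and>
      (\<forall>i\<in>{..<J}. \<forall>j\<le>1. poly (q i) (of_nat (n+j)) \<noteq> 0)"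
    have bn: "poly b (of_nat n + of_nat i) \<noteq> 0" if "i \<le> J" for i
      using H that by (metis add_leD1 le_add1 le_trans of_nat_add)
    have bn0: "poly b (of_nat n) \<noteq> 0" using bn[of 0] by simp
    have qn0: "poly (q i) (of_nat n) \<noteq> 0" if "i < J" for i
      using H that by (metis add_0 le0 lessThan_iff of_nat_0 add.right_neutral)
    have qn1: "poly (q i) (of_nat n + 1) \<noteq> 0" if "i < J" for i
      using H that by (metis lessThan_iff of_nat_1 of_nat_add order_refl)
    have Dn: "poly (D i) (of_nat n) \<noteq> 0" if "i \<le> J" for i
      using that bn0 bn[of i] qn1[of "i - 1"] qn0[of i] Jpos
      by (simp add: D_def qq_def add.commute)
    have trm: "poly (nu i) (of_nat n) / poly (D i) (of_nat n) * F (n+i) =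
        (if i = 0 then - G n else 0) + (if 1 \<le> i then u (i-1) (n+1) * G (n+1+(i-1)) else 0)
        - (if i < J then u i n * G (n+i) else 0)" if "i \<le> J" for i
    proof -
      have Gm: "G m = poly a (of_nat m) / poly b (of_nat m) * F m" for m by (simp add: G_def rat_eval_def)
      have um: "u j m = poly (p j) (of_nat m) / poly (q j) (of_nat m)" for j m by (simp add: u_def rat_eval_def)
      consider "i = 0" | "1 \<le> i" "i < J" | "i = J" "1 \<le> i" using \<open>i \<le> J\<close> by (cases "i = 0"; cases "i = J"; auto)
      then show ?thesis
      proof cases
        case 1
        have nz: "poly b (of_nat n) \<noteq> 0" "poly (q 0) (of_nat n) \<noteq> 0" "poly (q 0) (of_nat n + 1) \<noteq> 0"
          using bn0 qn0[of 0] qn1[of 0] Jpos by auto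
        show ?thesis using 1 Jpos nz
          by (simp add: nu_def D_def qq_def Gm um) (simp add: field_simps)
      next
        case 2
        have nz: "poly b (of_nat n) \<noteq> 0" "poly b (of_nat n + of_nat i) \<noteq> 0" "poly (q i) (of_nat n) \<noteq> 0"
           "poly (q (i - 1)) (of_nat n + 1) \<noteq> 0"
          using bn0 bn[of i] qn0[of i] qn1[of "i - 1"] 2 by auto
        have ni: "n + 1 + (i - 1) = n + i" using 2 by simp
        show ?thesis using 2 nz
          by (simp add: nu_def D_def qq_def Gm um ni) (simp add: field_simps)
      next
        case 3
        have nz: "poly b (of_nat n) \<noteq> 0" "poly b (of_nat n + of_nat i) \<noteq> 0"
           "poly (q (i - 1)) (of_nat n + 1) \<noteq> 0"
          using bn0 bn[of i] qn1[of "i - 1"] 3 by auto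
        have ni: "n + 1 + (i - 1) = n + i" using 3 by simp
        show ?thesis using 3 nz
          by (simp add: nu_def D_def qq_def Gm um ni) (simp add: field_simps)
      qed
    qed
    have "(\<Sum>i\<le>J. poly (nu i) (of_nat n) / poly (D i) (of_nat n) * F (n+i)) =
        (\<Sum>i\<le>J. (if i = 0 then - G n else 0) + (if 1 \<le> i then u (i-1) (n+1) * G (n+1+(i-1)) else 0)
        - (if i < J then u i n * G (n+i) else 0))"
      by (intro sum.cong refl trm) simp
    also have "\<dots> = - G n + (\<Sum>i<J. u i (n+1) * G (n+1+i)) - (\<Sum>i<J. u i n * G (n+i))"
      by (rule sum_shape[OF Jpos])
    also have "\<dots> = 0" using H by (simp add: u_def)
    finally show "(\<Sum>i\<le>J. poly (nu i) (of_nat n) / poly (D i) (of_nat n) * F (n+i)) = 0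
      \<and> (\<forall>i\<le>J. poly (D i) (of_nat n) \<noteq> 0)" using Dn by simp
  qed
  define PD where "PD = (\<Prod>j\<le>J. D j)"
  define z where "z i = nu i * (\<Prod>j\<in>{..J}-{i}. D j)" for i
  have PD_split: "PD = D i * (\<Prod>j\<in>{..J}-{i}. D j)" if "i \<le> J" for i
    unfolding PD_def using that by (subst prod.remove[of _ i]) auto
  have annz: "annihilates z J F"
    unfolding annihilates_def using seqrel
  proof (rule eventually_mono)
    fix n assume H: "(\<Sum>i\<le>J. poly (nu i) (of_nat n) / poly (D i) (of_nat n) * F (n+i)) = 0
      \<and> (\<forall>i\<le>J. poly (D i) (of_nat n) \<noteq> 0)"
    have "apply_op z J F n = poly PD (of_nat n) * (\<Sum>i\<le>J. poly (nu i) (of_nat n) / poly (D i) (of_nat n) * F (n+i))"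
      unfolding apply_op_def sum_distrib_left
    proof (rule sum.cong[OF refl])
      fix i assume i: "i \<in> {..J}"
      then have "poly (D i) (of_nat n) \<noteq> 0" using H by simp
      then show "poly (z i) (of_nat n) * F (n + i) =
          poly PD (of_nat n) * (poly (nu i) (of_nat n) / poly (D i) (of_nat n) * F (n + i))"
        using PD_split[of i] i by (simp add: z_def)
    qed
    then show "apply_op z J F n = 0" using H by simp
  qed
  have uniq: "\<forall>i\<le>J. c J * z i = z J * c i" by (rule ann_unique[OF ordF annF cJ annz])
  define e where "e i = ofp (nu i) / ofp (D i)" for i
  have PDnz: "PD \<noteq> 0" unfolding PD_def using Dnz by simp
  have e_alt: "e i = ofp (z i) / ofp PD" if "i \<le> J" for i
  proof -
    have "(\<Prod>j\<in>{..J}-{i}. D j) \<noteq> 0" using Dnz by simp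
    then show ?thesis using PD_split[OF that] Dnz[OF that] by (simp add: e_def z_def)
  qed
  have e_rel: "e i * ofp (c J) = e J * ofp (c i)" if "i \<le> J" for i
  proof -
    have "ofp (c J) * ofp (z i) = ofp (z J) * ofp (c i)" using uniq that by (metis ofp_mult)
    then show ?thesis using e_alt[OF that] e_alt[of J] by (simp add: field_simps)
  qed
  define \<Lambda> where "\<Lambda> = e J / ofp (c J)"
  have e_lam: "e i = \<Lambda> * ofp (c i)" if "i \<le> J" for i
    using e_rel[OF that] cJ by (simp add: \<Lambda>_def field_simps)
  define R where "R = ofp a / ofp b"
  define W where "W i = ofp (p i) / ofp (q i) * sF (of_nat i) R" for i
  have sFR: "sF k R = ofp (sh k a) / ofp (sh k b)" for k by (simp add: R_def)
  have e_form: "e i = (if i = 0 then - R else 0) + (if 1 \<le> i then sF 1 (W (i - 1)) else 0)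
       - (if i < J then W i else 0)" if "i \<le> J" for i
  proof -
    have sW: "sF 1 (W (i - 1)) = ofp (sh 1 (p (i - 1))) / ofp (sh 1 (q (i - 1))) *
        (ofp (sh (of_nat i) a) / ofp (sh (of_nat i) b))" if "1 \<le> i"
    proof -
      have "(1::'k) + of_nat (i - 1) = of_nat i" using that by (simp add: of_nat_diff)
      then show ?thesis by (simp add: W_def sFR sh_sh)
    qed
    consider "i = 0" | "1 \<le> i" "i < J" | "i = J" "1 \<le> i" using \<open>i \<le> J\<close> by (cases "i = 0"; cases "i = J"; auto)
    then show ?thesis
    proof cases
      case 1
      have nz: "q 0 \<noteq> 0" using qnz Jpos by auto
      show ?thesis using 1 Jpos nz bnz
        by (simp add: e_def nu_def D_def qq_def W_def R_def) (simp add: field_simps)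
    next
      case 2
      have nz: "q i \<noteq> 0" "q (i - 1) \<noteq> 0" using qnz 2 by auto
      show ?thesis using 2 nz bnz sW
        by (simp add: e_def nu_def D_def qq_def W_def sFR) (simp add: field_simps)
    next
      case 3
      have nz: "q (i - 1) \<noteq> 0" using qnz 3 by auto
      show ?thesis using 3 nz bnz sW
        by (simp add: e_def nu_def D_def qq_def W_def sFR)
    qed
  qed
  have tel: "(\<Sum>i\<le>J. sF (of_nat (J - i)) (e i)) = - sF (of_nat J) R"
  proof -
    have "(\<Sum>i\<le>J. sF (of_nat (J - i)) (e i)) = (\<Sum>i\<le>J. sF (of_nat (J - i))
     ((if i = 0 then - R else 0) + (if 1 \<le> i then sF 1 (W (i - 1)) else 0) - (if i < J then W i else 0)))"
      by (rule sum.cong[OF refl]) (metis atMost_iff e_form)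
    also have "\<dots> = - sF (of_nat J) R" by (rule telescope[OF Jpos])
    finally show ?thesis .
  qed
  have main: "sF (of_nat J) R = - (\<Sum>i\<le>J. sF (of_nat (J - i)) \<Lambda> * ofp (sh (of_nat (J - i)) (c i)))"
  proof -
    have "(\<Sum>i\<le>J. sF (of_nat (J - i)) (e i)) = (\<Sum>i\<le>J. sF (of_nat (J - i)) \<Lambda> * ofp (sh (of_nat (J - i)) (c i)))"
      by (rule sum.cong[OF refl]) (metis atMost_iff e_lam sF_mult sF_ofp)
    then show ?thesis using tel by simp
  qed
  obtain P Q where PQ: "coprime P Q" "Q \<noteq> 0" "\<Lambda> = Fract P Q" by (rule coprime_rep)
  have id: "sh (of_nat J) a * (\<Prod>i\<le>J. sh (of_nat (J-i)) Q) =
        - (sh (of_nat J) b * (\<Sum>i\<le>J. (sh (of_nat (J-i)) P * sh (of_nat (J-i)) (c i)) *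
              (\<Prod>j\<in>{..J}-{i}. sh (of_nat (J-j)) Q)))"
  proof -
    define Qs where "Qs i = ofp (sh (of_nat (J-i)) Q)" for i
    define T where "T i = ofp (sh (of_nat (J-i)) P * sh (of_nat (J-i)) (c i))" for i
    have Qsnz: "Qs i \<noteq> 0" for i using PQ(2) by (simp add: Qs_def)
    have sL: "sF k \<Lambda> = ofp (sh k P) / ofp (sh k Q)" for k using PQ(3) by (simp add: Fract_div)
    have m2: "ofp (sh (of_nat J) a) / ofp (sh (of_nat J) b) = - (\<Sum>i\<le>J. T i / Qs i)"
    proof -
      have "(\<Sum>i\<le>J. sF (of_nat (J - i)) \<Lambda> * ofp (sh (of_nat (J - i)) (c i))) = (\<Sum>i\<le>J. T i / Qs i)"
        by (rule sum.cong[OF refl]) (simp add: sL T_def Qs_def)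
      then show ?thesis using main by (simp add: sFR)
    qed
    have rem: "T i * (\<Prod>j\<in>{..J}-{i}. Qs j) = T i / Qs i * (\<Prod>j\<le>J. Qs j)" if "i \<in> {..J}" for i
      using prod.remove[of "{..J}" i Qs] that Qsnz[of i] by simp
    have "ofp (sh (of_nat J) b * (\<Sum>i\<le>J. (sh (of_nat (J-i)) P * sh (of_nat (J-i)) (c i)) *
              (\<Prod>j\<in>{..J}-{i}. sh (of_nat (J-j)) Q)))
        = ofp (sh (of_nat J) b) * (\<Sum>i\<le>J. T i * (\<Prod>j\<in>{..J}-{i}. Qs j))"
      by (simp add: ofp_sum ofp_prod T_def Qs_def)
    also have "\<dots> = ofp (sh (of_nat J) b) * ((\<Sum>i\<le>J. T i / Qs i) * (\<Prod>j\<le>J. Qs j))"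
      by (simp only: sum_distrib_right) (simp only: sum.cong[OF refl rem])
    also have "\<dots> = - (ofp (sh (of_nat J) a) * (\<Prod>j\<le>J. Qs j))"
    proof -
      have S: "(\<Sum>i\<le>J. T i / Qs i) = - (ofp (sh (of_nat J) a) / ofp (sh (of_nat J) b))"
        using m2 by (simp only: minus_equation_iff minus_minus)
      have "ofp (sh (of_nat J) b) \<noteq> 0" using bnz by simp
      then show ?thesis unfolding S by simp
    qed
    also have "\<dots> = - ofp (sh (of_nat J) a * (\<Prod>i\<le>J. sh (of_nat (J-i)) Q))"
      by (simp add: ofp_prod Qs_def)
    finally show ?thesis by (simp only: ofp_uminus[symmetric] ofp_inj minus_equation_iff minus_minus)
  qed
  show ?thesis by (rule key[OF PQ(1) PQ(2) id assms(8) assms(9)])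
qed


end
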